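(* Let $\mathcal P$ be an equal-area CPOS $2n$-gon which is not symmetric with respect to any point. Then for every $i$, $D(i-\tfrac12)\ne D(i+\tfrac12)$ and $M_i$ is the midpoint of the segment $D(i-\tfrac12)D(i+\tfrac12)$. Moreover every vertex of the area evolute and every vertex of the central symmetry set is a cusp; in particular both have exactly $n$ cusps.
   Context: A CPOS $2n$-gon ($n\ge2$) is a closed planar polygon $\mathcal P$ with vertices $P_1,\dots,P_{2n}$ (indices mod $2n$) bounding a convex region, with no two adjacent sides parallel, with $P_{i+n+1}-P_{i+n}$ parallel to $P_{i+1}-P_i$ for all $i$, and positively oriented: $[P_{i+1}-P_i,P_{j+1}-P_j]>0$ for $1\le i<j\le n$ ($[\cdot,\cdot]$ = determinant). It is equal-area if $[P_{i+1}-P_i,P_i-P_{i-1}]$ is independent of $i$, and symmetric w.r.t. $O$ if $P_{i+n}-O=O-P_i$ for all $i$. $d_i$ is the line through $P_i,P_{i+n}$; $D(i+\tfrac12)=d_i\cap d_{i+1}$; the central symmetry set is the closed polygon with vertices $D(1+\tfrac12),\dots,D(n+\tfrac12)$; $M_i=\tfrac12(P_i+P_{i+n})$ and the area evolute is the closed polygon with vertices $M_1,\dots,M_n$. Define $\lambda(i+\tfrac12)$, $1\le i\le 2n$, by $D(i+\tfrac12)=P_i+\lambda(i+\tfrac12)(P_{i+n}-P_i)$ (with $D(i+n+\frac12)=D(i+\frac12)$). A vertex $D(i_0+\tfrac12)$ is a cusp if $\lambda(i_0+\tfrac12)$ is a local extremum of the cyclic sequence $(\lambda(i+\tfrac12))_{i\bmod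 2n}$; a vertex $M_{i_0}$ is a cusp if $(\lambda(i_0-\tfrac12)-\tfrac12)(\lambda(i_0+\tfrac12)-\tfrac12)<0$. *)

theory Defs
  imports "HOL-Analysis.Analysis"
begin

definition det2 :: "real^2 \<Rightarrow> real^2 \<Rightarrow> real" where
  "det2 u v = u$1 * v$2 - u$2 * v$1"

text \<open>A polygon with 2n vertices is given by P :: int => real^2, periodic of period 2n
  (indices mod 2n).\<close>
definition periodic2n :: "nat \<Rightarrow> (int \<Rightarrow> real^2) \<Rightarrow> bool" where
  "periodic2n n P \<longleftrightarrow> (\<forall>i. P (i + 2 * int n) = P i)"

text \<open>The closed polygon bounds a convex region: every vertex lies in the closed
  half-plane to the left of every (oriented) side.\<close>
definition convex_polygon :: "(int \<Rightarrow> real^2) \<Rightarrow> bool" where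
  "convex_polygon P \<longleftrightarrow> (\<forall>i j. det2 (P (i+1) - P i) (P j - P i) \<ge> 0)"

definition CPOS :: "nat \<Rightarrow> (int \<Rightarrow> real^2) \<Rightarrow> bool" where
  "CPOS n P \<longleftrightarrow> n \<ge> 2 \<and> periodic2n n P \<and> convex_polygon P
     \<and> (\<forall>i. det2 (P (i+1) - P i) (P i - P (i-1)) \<noteq> 0)
     \<and> (\<forall>i. det2 (P (i + int n + 1) - P (i + int n)) (P (i+1) - P i) = 0)
     \<and> (\<forall>i j. 1 \<le> i \<and> i < j \<and> j \<le> int n \<longrightarrow> det2 (P (i+1) - P i) (P (j+1) - P j) > 0)"

definition equal_area :: "(int \<Rightarrow> real^2) \<Rightarrow> bool" where
  "equal_area P \<longleftrightarrow> (\<forall>i j. det2 (P (i+1) - P i) (P i - P (i-1)) = det2 (P (j+1) - P j) (P j - P (j-1)))"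

definition symmetric_wrt :: "nat \<Rightarrow> (int \<Rightarrow> real^2) \<Rightarrow> real^2 \<Rightarrow> bool" where
  "symmetric_wrt n P c \<longleftrightarrow> (\<forall>i. P (i + int n) - c = c - P i)"

definition dline :: "nat \<Rightarrow> (int \<Rightarrow> real^2) \<Rightarrow> int \<Rightarrow> (real^2) set" where
  "dline n P i = {P i + t *\<^sub>R (P (i + int n) - P i) | t. True}"

text \<open>lam n P i is lambda(i+1/2): the parameter with D(i+1/2) = P_i + lambda (P_{i+n} - P_i),
  where D(i+1/2) is the intersection point of d_i and d_{i+1}.\<close>
definition lam :: "nat \<Rightarrow> (int \<Rightarrow> real^2) \<Rightarrow> int \<Rightarrow> real" where
  "lam n P i = (THE t. P i + t *\<^sub>R (P (i + int n) - P i) \<in> dline n P (i+1))"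

text \<open>Dh n P i is D(i+1/2) = d_i \<inter> d_{i+1}.\<close>
definition Dh :: "nat \<Rightarrow> (int \<Rightarrow> real^2) \<Rightarrow> int \<Rightarrow> real^2" where
  "Dh n P i = (THE x. x \<in> dline n P i \<inter> dline n P (i+1))"

definition Mid :: "nat \<Rightarrow> (int \<Rightarrow> real^2) \<Rightarrow> int \<Rightarrow> real^2" where
  "Mid n P i = (1/2) *\<^sub>R (P i + P (i + int n))"

text \<open>D(i0+1/2) is a cusp: lambda(i0+1/2) is a (strict) local extremum of the cyclic sequence.\<close>
definition css_cusp :: "nat \<Rightarrow> (int \<Rightarrow> real^2) \<Rightarrow> int \<Rightarrow> bool" where
  "css_cusp n P i0 \<longleftrightarrow>
     (lam n P i0 > lam n P (i0-1) \<and> lam n P i0 > lam n P (i0+1)) \<or>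
     (lam n P i0 < lam n P (i0-1) \<and> lam n P i0 < lam n P (i0+1))"

definition ae_cusp :: "nat \<Rightarrow> (int \<Rightarrow> real^2) \<Rightarrow> int \<Rightarrow> bool" where
  "ae_cusp n P i0 \<longleftrightarrow> (lam n P (i0-1) - 1/2) * (lam n P i0 - 1/2) < 0"

end

theory Submission
  imports Defs
begin

lemma det2_add_l: "det2 (u+v) w = det2 u w + det2 v w" by (simp add: det2_def algebra_simps)
lemma det2_add_r: "det2 w (u+v) = det2 w u + det2 w v" by (simp add: det2_def algebra_simps)
lemma det2_diff_l: "det2 (u-v) w = det2 u w - det2 v w" by (simp add: det2_def algebra_simps)
lemma det2_diff_r: "det2 w (u-v) = det2 w u - det2 w v" by (simp add: det2_def algebra_simps)
lemma det2_scale_l: "det2 (a *\<^sub>R u) w = a * det2 u w" by (simp add: det2_def algebra_simps)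
lemma det2_scale_r: "det2 w (a *\<^sub>R u) = a * det2 w u" by (simp add: det2_def algebra_simps)
lemma det2_self: "det2 u u = 0" by (simp add: det2_def algebra_simps)
lemma det2_swap: "det2 v u = - det2 u v" by (simp add: det2_def algebra_simps)
lemma det2_zero_l: "det2 0 u = 0" by (simp add: det2_def)

lemmas det2_lin = det2_add_l det2_add_r det2_diff_l det2_diff_r det2_scale_l det2_scale_r det2_self

lemma parallel_ex:
  assumes "det2 u v = 0" "v \<noteq> 0" shows "\<exists>s. u = s *\<^sub>R v"
proof -
  have "v$1 \<noteq> 0 \<or> v$2 \<noteq> 0" using assms(2) by (auto simp: vec_eq_iff forall_2)
  then show ?thesis
  proof
    assume h: "v$1 \<noteq> 0"
    show ?thesis apply (rule exI[of _ "u$1/v$1"]) using h assms(1)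
      by (auto simp: vec_eq_iff forall_2 det2_def field_simps)
  next
    assume h: "v$2 \<noteq> 0"
    show ?thesis apply (rule exI[of _ "u$2/v$2"]) using h assms(1)
      by (auto simp: vec_eq_iff forall_2 det2_def field_simps)
  qed
qed

lemma key_uniq:
  fixes p e w :: "real^2"
  assumes d: "det2 e w > 0" and s: "s \<noteq> 1"
  shows "p + t *\<^sub>R w = (p + e) + u *\<^sub>R (w + (s - 1) *\<^sub>R e) \<longleftrightarrow> t = 1/(1-s) \<and> u = 1/(1-s)"
proof
  assume h: "p + t *\<^sub>R w = (p + e) + u *\<^sub>R (w + (s - 1) *\<^sub>R e)"
  hence h': "t *\<^sub>R w = e + u *\<^sub>R w + (u * (s - 1)) *\<^sub>R e"
    by (simp add: algebra_simps)
  have "det2 e (t *\<^sub>R w) = det2 e (e + u *\<^sub>R w + (u * (s - 1)) *\<^sub>R e)" using h' by simp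
  hence "t * det2 e w = u * det2 e w" by (simp add: det2_lin)
  hence tu: "t = u" using d by simp
  have "det2 w (t *\<^sub>R w) = det2 w (e + u *\<^sub>R w + (u * (s - 1)) *\<^sub>R e)" using h' by simp
  hence "0 = det2 w e * (1 + u * (s - 1))" by (simp add: det2_lin algebra_simps)
  moreover have "det2 w e \<noteq> 0" using d det2_swap[of w e] by simp
  ultimately have "1 + u * (s - 1) = 0" by simp
  hence "u = 1/(1-s)" using s by (simp add: field_simps)
  thus "t = 1/(1-s) \<and> u = 1/(1-s)" using tu by simp
next
  assume h: "t = 1/(1-s) \<and> u = 1/(1-s)"
  have "1 + u * (s - 1) = 0" using h s by (simp add: field_simps)
  hence "(1 + u * (s - 1)) *\<^sub>R e = 0" by simp
  hence "e + (u * (s - 1)) *\<^sub>R e = 0" by (simp add: scaleR_left_distrib)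
  moreover have "(p + e) + u *\<^sub>R (w + (s - 1) *\<^sub>R e) = p + u *\<^sub>R w + (e + (u * (s - 1)) *\<^sub>R e)"
    by (simp add: algebra_simps)
  ultimately show "p + t *\<^sub>R w = (p + e) + u *\<^sub>R (w + (s - 1) *\<^sub>R e)"
    using h by simp
qed

lemma lsum_aux:
  fixes a b :: real assumes "a * b = 1" "a < 0" shows "1/(1-b) + 1/(1-a) = 1"
proof -
  have b: "b = 1/a" using assms by (simp add: field_simps)
  have "1 - a \<noteq> 0" "a \<noteq> 0" "a - 1 \<noteq> 0" "a * 2 \<noteq> 1 + a * a" using assms(2)
    by (auto simp: not_less zero_le_mult_iff intro: add_nonneg_nonneg) (smt (verit) zero_le_square)
  thus ?thesis unfolding b by (simp add: field_simps)
qed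

theorem mainTheorem5:
  fixes n :: nat and P :: "int \<Rightarrow> real^2"
  assumes "CPOS n P" and "equal_area P"
    and "\<not> (\<exists>c. symmetric_wrt n P c)"
  shows "(\<forall>i. Dh n P (i-1) \<noteq> Dh n P i \<and> Mid n P i = (1/2) *\<^sub>R (Dh n P (i-1) + Dh n P i))
    \<and> (\<forall>i. ae_cusp n P i) \<and> (\<forall>i. css_cusp n P i)
    \<and> card {i \<in> {1..int n}. ae_cusp n P i} = n
    \<and> card {i \<in> {1..int n}. css_cusp n P i} = n"
proof -
  define e where "e i = P (i+1) - P i" for i
  define w where "w i = P (i + int n) - P i" for i
  from assms(1) have n2: "n \<ge> 2" and conv: "\<And>i j. det2 (P (i+1) - P i) (P j - P i) \<ge> 0"
    and np: "\<And>i. det2 (P (i+1) - P i) (P i - P (i-1)) \<noteq> 0"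
    and par: "\<And>i. det2 (P (i + int n + 1) - P (i + int n)) (P (i+1) - P i) = 0"
    and ori: "\<And>i j. 1 \<le> i \<Longrightarrow> i < j \<Longrightarrow> j \<le> int n \<Longrightarrow> det2 (P (i+1) - P i) (P (j+1) - P j) > 0"
    unfolding CPOS_def convex_polygon_def by auto
  have F1: "det2 (e (i-1)) (e i) > 0" for i
  proof -
    have "det2 (e (i-1)) (P (i+1) - P (i-1)) \<ge> 0" using conv[of "i-1" "i+1"] by (simp add: e_def)
    moreover have "P (i+1) - P (i-1) = e (i-1) + e i" by (simp add: e_def)
    moreover have "det2 (e i) (e (i-1)) \<noteq> 0" using np[of i] by (simp add: e_def)
    ultimately show ?thesis using det2_swap[of "e i" "e (i-1)"] by (simp add: det2_lin)
  qed
  have F1': "det2 (e i) (e (i+1)) > 0" for i using F1[of "i+1"] by simp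
  have enz: "e i \<noteq> 0" for i using F1'[of i] by (auto simp: det2_zero_l)
  have "\<forall>i. \<exists>s. e (i + int n) = s *\<^sub>R e i"
    using par enz by (auto simp: e_def intro!: parallel_ex)
  then obtain s where s: "\<And>i. e (i + int n) = s i *\<^sub>R e i" by metis
  have F3: "s i * s (i-1) = 1" for i
  proof -
    have ea: "det2 (e i) (e (i-1)) = det2 (e (i + int n)) (e (i + int n - 1))"
      using assms(2) unfolding equal_area_def e_def
      by (metis diff_add_cancel)
    have "e (i + int n - 1) = e (i - 1 + int n)" by (simp add: algebra_simps)
    also have "\<dots> = s (i-1) *\<^sub>R e (i-1)" by (rule s)
    finally have "det2 (e i) (e (i-1)) = (s i * s (i-1)) * det2 (e i) (e (i-1))"
      using ea s[of i] by (simp add: det2_lin mult.commute)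
    moreover have "det2 (e i) (e (i-1)) \<noteq> 0" using F1[of i] det2_swap[of "e i" "e (i-1)"] by simp
    ultimately show ?thesis by simp
  qed
  have F4: "s 1 < 0"
  proof -
    have a: "det2 (e 1) (e (int n)) > 0" using ori[of 1 "int n"] n2 by (simp add: e_def)
    have "det2 (e (int n)) (e (int n + 1)) > 0" using F1'[of "int n"] by simp
    moreover have "e (int n + 1) = s 1 *\<^sub>R e 1" using s[of 1] by (simp add: add.commute)
    ultimately have "s 1 * det2 (e (int n)) (e 1) > 0" by (simp add: det2_lin)
    hence "- s 1 * det2 (e 1) (e (int n)) > 0" using det2_swap[of "e (int n)" "e 1"] by simp
    with a show ?thesis by (simp add: mult_less_0_iff)
  qed
  have F5: "s i < 0" for i
  proof (induct i rule: int_induct[where k=1])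
    case base thus ?case by (rule F4)
  next
    case (step1 i)
    have "0 < s (i+1) * s i" using F3[of "i+1"] by simp
    with step1 show ?case by (simp add: zero_less_mult_iff)
  next
    case (step2 i)
    have "0 < s i * s (i-1)" using F3[of i] by simp
    with step2 show ?case by (simp add: zero_less_mult_iff)
  qed
  have F6: "det2 (e i) (w i) > 0" for i
  proof -
    have "det2 (e (i + int n)) (P (i+2) - P (i + int n)) \<ge> 0"
      using conv[of "i + int n" "i+2"] by (simp add: e_def)
    hence "s i * det2 (e i) (P (i+2) - P (i + int n)) \<ge> 0" by (simp only: s det2_scale_l)
    hence a: "det2 (e i) (P (i+2) - P (i + int n)) \<le> 0" using F5[of i]
      by (simp add: zero_le_mult_iff)
    have "P (i+2) - P (i + int n) = e i + e (i+1) - w i"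
      by (simp add: e_def w_def algebra_simps)
    hence "det2 (e i) (P (i+2) - P (i + int n)) = det2 (e i) (e (i+1)) - det2 (e i) (w i)"
      by (simp add: det2_lin)
    with a F1'[of i] show ?thesis by simp
  qed
  have Pe: "P (i+1) = P i + e i" for i by (simp add: e_def)
  have F7: "w (i+1) = w i + (s i - 1) *\<^sub>R e i" for i
  proof -
    have "P (i + 1 + int n) = P (i + int n) + s i *\<^sub>R e i"
      using s[of i] unfolding e_def by (simp add: algebra_simps)
    thus ?thesis by (simp add: w_def e_def algebra_simps)
  qed
  define l where "l i = 1 / (1 - s i)" for i
  have s1: "s i \<noteq> 1" for i using F5[of i] by simp
  have dl: "dline n P i = {P i + t *\<^sub>R w i | t. True}" for i by (simp add: dline_def w_def)
  have memiff: "P i + t *\<^sub>R w i \<in> dline n P (i+1) \<longleftrightarrow> t = l i" for i t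
  proof -
    have "P i + t *\<^sub>R w i \<in> dline n P (i+1) \<longleftrightarrow>
      (\<exists>u. P i + t *\<^sub>R w i = (P i + e i) + u *\<^sub>R (w i + (s i - 1) *\<^sub>R e i))"
      unfolding dl Pe F7 by auto
    also have "\<dots> \<longleftrightarrow> t = l i" using key_uniq[OF F6[of i] s1[of i]] by (auto simp: l_def)
    finally show ?thesis .
  qed
  have lam_eq: "lam n P i = l i" for i
    unfolding lam_def using memiff[of i] by (simp add: w_def[symmetric])
  have Dh_eq: "Dh n P i = P i + l i *\<^sub>R w i" for i
  proof -
    have "x \<in> dline n P i \<inter> dline n P (i+1) \<longleftrightarrow> x = P i + l i *\<^sub>R w i" for x
      using memiff[of i] unfolding dl[of i] by auto
    thus ?thesis unfolding Dh_def by simp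
  qed
  have Dh_eq2: "Dh n P (i-1) = P i + l (i-1) *\<^sub>R w i" for i
  proof -
    have "P (i-1) + l (i-1) *\<^sub>R w (i-1) = (P (i-1) + e (i-1)) + l (i-1) *\<^sub>R (w (i-1) + (s (i-1) - 1) *\<^sub>R e (i-1))"
      using key_uniq[OF F6[of "i-1"] s1[of "i-1"]] by (simp add: l_def)
    also have "\<dots> = P i + l (i-1) *\<^sub>R w i" using Pe[of "i-1"] F7[of "i-1"] by simp
    finally show ?thesis by (simp add: Dh_eq)
  qed
  have lsum: "l (i-1) + l i = 1" for i
  proof -
    show ?thesis using F3[of i] F5[of i] unfolding l_def by (rule lsum_aux)
  qed
  have lsum': "l i + l (i+1) = 1" for i using lsum[of "i+1"] by simp
  have notsym: "s i \<noteq> -1" for i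
  proof
    assume k: "s i = -1"
    have all: "s j = -1" for j
    proof (induct j rule: int_induct[where k=i])
      case base thus ?case by (rule k)
    next
      case (step1 j) thus ?case using F3[of "j+1"] by simp
    next
      case (step2 j) thus ?case using F3[of j] by simp
    qed
    have Q: "P j + P (j + int n) = P 0 + P (int n)" for j
    proof (induct j rule: int_induct[where k=0])
      case base thus ?case by simp
    next
      case (step1 j)
      have "P (j + 1 + int n) = P (j + int n) - e j"
        using s[of j] all[of j] unfolding e_def by (simp add: algebra_simps)
      thus ?case using step1 Pe[of j] by (simp add: algebra_simps)
    next
      case (step2 j)
      have "P (j + int n) = P (j - 1 + int n) - e (j-1)"
        using s[of "j-1"] all[of "j-1"] unfolding e_def by (simp add: algebra_simps)
      thus ?case using step2 Pe[of "j-1"] by (simp add: algebra_simps)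
    qed
    have "symmetric_wrt n P ((1/2) *\<^sub>R (P 0 + P (int n)))"
      unfolding symmetric_wrt_def
    proof
      fix j
      have "P (j + int n) = (P 0 + P (int n)) - P j" using Q[of j] by (simp add: algebra_simps)
      moreover have "(P 0 + P (int n)) = (1/2) *\<^sub>R (P 0 + P (int n)) + (1/2) *\<^sub>R (P 0 + P (int n))"
        by (simp add: scaleR_left_distrib[symmetric])
      ultimately show "P (j + int n) - (1/2) *\<^sub>R (P 0 + P (int n)) = (1/2) *\<^sub>R (P 0 + P (int n)) - P j"
        by (simp add: algebra_simps)
    qed
    thus False using assms(3) by blast
  qed
  have lhalf: "l i \<noteq> 1/2" for i
  proof
    assume "l i = 1/2"
    hence "s i = -1" using s1[of i] unfolding l_def by (simp add: field_simps)
    thus False using notsym by blast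
  qed
  have wnz: "w i \<noteq> 0" for i using F6[of i] by (auto simp: det2_def)
  have part1: "Dh n P (i-1) \<noteq> Dh n P i \<and> Mid n P i = (1/2) *\<^sub>R (Dh n P (i-1) + Dh n P i)" for i
  proof
    show "Dh n P (i-1) \<noteq> Dh n P i"
    proof
      assume "Dh n P (i-1) = Dh n P i"
      hence "l (i-1) *\<^sub>R w i = l i *\<^sub>R w i" by (simp add: Dh_eq[of i] Dh_eq2)
      hence "l (i-1) = l i" using wnz[of i] by simp
      thus False using lsum[of i] lhalf[of i] by simp
    qed
    have "Dh n P (i-1) + Dh n P i = P i + P i + (l (i-1) + l i) *\<^sub>R w i"
      by (simp add: Dh_eq[of i] Dh_eq2 scaleR_left_distrib algebra_simps)
    also have "\<dots> = P i + P (i + int n)" by (simp add: lsum w_def)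
    finally show "Mid n P i = (1/2) *\<^sub>R (Dh n P (i-1) + Dh n P i)" by (simp add: Mid_def)
  qed
  have ae: "ae_cusp n P i" for i
  proof -
    have eq: "l (i-1) - 1/2 = - (l i - 1/2)" using lsum[of i] by simp
    moreover have "(l i - 1/2) \<noteq> 0" using lhalf[of i] by simp
    ultimately have "(l (i-1) - 1/2) * (l i - 1/2) = - ((l i - 1/2) * (l i - 1/2))" by (simp only: eq mult_minus_left)
    moreover have "(l i - 1/2) * (l i - 1/2) > 0" using \<open>(l i - 1/2) \<noteq> 0\<close> by (simp only: zero_less_mult_iff) auto
    ultimately show ?thesis unfolding ae_cusp_def lam_eq by linarith
  qed
  have css: "css_cusp n P i" for i
    unfolding css_cusp_def lam_eq using lsum[of i] lsum'[of i] lhalf[of i] by auto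
  have "{i \<in> {1..int n}. ae_cusp n P i} = {1..int n}" "{i \<in> {1..int n}. css_cusp n P i} = {1..int n}"
    using ae css by auto
  thus ?thesis using part1 ae css by simp
qed

end
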